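(* Let $\alpha\in\mathbb{F}_q^*$ and let $\mathscr{C}\subseteq\mathbb{F}_q^n$ be a skew $\alpha$-cyclic code whose generator polynomial has positive degree. If $\mathscr{C}=\mathscr{C}^\perp$, then $n$ is even and $\alpha=\pm1$.
   Context: Let $\mathbb{F}_q$ be a finite field and $\theta$ a field automorphism of $\mathbb{F}_q$. For $\alpha\in\mathbb{F}_q^*$, a linear code $\mathscr{C}\subseteq\mathbb{F}_q^n$ is skew $\alpha$-cyclic if it is invariant under $\phi_{\alpha,\theta}(c_0,\dots,c_{n-1})=(\alpha\theta(c_{n-1}),\theta(c_0),\dots,\theta(c_{n-2}))$. Let $R=\mathbb{F}_q[x;\theta]$ be the skew polynomial ring with multiplication rule $xa=\theta(a)x$ for $a\in\mathbb{F}_q$. Identify $(a_0,\dots,a_{n-1})\in\mathbb{F}_q^n$ with the class of $\sum_i a_ix^i$ in the left $R$-module $R/R(x^n-\alpha)$. Under this identification a skew $\alpha$-cyclic code is a left $R$-submodule of the form $Rg/R(x^n-\alpha)$ for a unique monic $g\in R$ of minimal degree, which is a right divisor of $x^n-\alpha$ (the generator polynomial); the code has dimension $n-\deg g$. $\mathscr{C}^\perp$ denotes the dual code with respect to the standard bilinear form. *)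

theory Defs
  imports "HOL-Computational_Algebra.Polynomial"
begin

definition field_automorphism :: "('a::field \<Rightarrow> 'a) \<Rightarrow> bool" where
  "field_automorphism \<theta> \<longleftrightarrow> bij \<theta> \<and> (\<forall>a b. \<theta> (a + b) = \<theta> a + \<theta> b) \<and> (\<forall>a b. \<theta> (a * b) = \<theta> a * \<theta> b)"

definition linear_code :: "nat \<Rightarrow> 'a::field list set \<Rightarrow> bool" where
  "linear_code n C \<longleftrightarrow> C \<subseteq> {v. length v = n} \<and> replicate n 0 \<in> C
     \<and> (\<forall>u\<in>C. \<forall>v\<in>C. map2 (+) u v \<in> C) \<and> (\<forall>a. \<forall>u\<in>C. map (\<lambda>x. a * x) u \<in> C)"

definition skew_shift :: "'a::field \<Rightarrow> ('a \<Rightarrow> 'a) \<Rightarrow> 'a list \<Rightarrow> 'a list" where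
  "skew_shift \<alpha> \<theta> c = (case c of [] \<Rightarrow> [] | _ \<Rightarrow> (\<alpha> * \<theta> (last c)) # map \<theta> (butlast c))"

definition skew_cyclic_code :: "nat \<Rightarrow> 'a::field \<Rightarrow> ('a \<Rightarrow> 'a) \<Rightarrow> 'a list set \<Rightarrow> bool" where
  "skew_cyclic_code n \<alpha> \<theta> C \<longleftrightarrow> linear_code n C \<and> (\<forall>c\<in>C. skew_shift \<alpha> \<theta> c \<in> C)"

definition dual_code :: "nat \<Rightarrow> 'a::field list set \<Rightarrow> 'a list set" where
  "dual_code n C = {v. length v = n \<and> (\<forall>c\<in>C. (\<Sum>i<n. v ! i * c ! i) = 0)}"

text \<open>Multiplication in the skew polynomial ring F[x;theta], with x a = theta(a) x,
  skew polynomials being represented by their (left) coefficients.\<close>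
definition skew_mult :: "('a::field \<Rightarrow> 'a) \<Rightarrow> 'a poly \<Rightarrow> 'a poly \<Rightarrow> 'a poly" where
  "skew_mult \<theta> p q = (\<Sum>i\<le>degree p. \<Sum>j\<le>degree q. monom (coeff p i * (\<theta> ^^ i) (coeff q j)) (i + j))"

text \<open>The left ideal of R consisting of all skew polynomials whose class in
  R/R(x^n - alpha) corresponds to a codeword of C
  (vector (a_0,...,a_{n-1}) identified with sum a_i x^i).\<close>
definition code_ideal :: "nat \<Rightarrow> 'a::field \<Rightarrow> ('a \<Rightarrow> 'a) \<Rightarrow> 'a list set \<Rightarrow> 'a poly set" where
  "code_ideal n \<alpha> \<theta> C = {p. \<exists>c\<in>C. \<exists>h. p = Poly c + skew_mult \<theta> h (monom 1 n - [:\<alpha>:])}"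

definition skew_generator :: "nat \<Rightarrow> 'a::field \<Rightarrow> ('a \<Rightarrow> 'a) \<Rightarrow> 'a list set \<Rightarrow> 'a poly \<Rightarrow> bool" where
  "skew_generator n \<alpha> \<theta> C g \<longleftrightarrow> lead_coeff g = 1 \<and> g \<in> code_ideal n \<alpha> \<theta> C
     \<and> (\<forall>p\<in>code_ideal n \<alpha> \<theta> C. p \<noteq> 0 \<longrightarrow> degree g \<le> degree p)"

end

theory Submission
  imports Defs
begin


lemma dot_Cons: "(\<Sum>i<Suc n. (y#u)!i * (x#w)!i) = y*x + (\<Sum>i<n. u!i*w!i)"
  by (subst sum.lessThan_Suc_shift) simp

lemma len_Suc_Cons: "length c = Suc n \<Longrightarrow> \<exists>x t. c = x # t \<and> length t = n"
  by (cases c) auto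

lemma count_code:
  fixes C :: "'a::{finite,field} list set"
  assumes "linear_code n C"
  shows "\<exists>k\<le>n. card C = card (UNIV::'a set) ^ k \<and> card (dual_code n C) = card (UNIV::'a set) ^ (n-k)"
  using assms
proof (induction n arbitrary: C)
  case 0
  then have "C = {[]}" unfolding linear_code_def by auto
  moreover have "dual_code 0 C = {[]}" unfolding dual_code_def by auto
  ultimately show ?case by auto
next
  case (Suc n)
  let ?q = "card (UNIV::'a set)"
  have L: "C \<subseteq> {v. length v = Suc n}" "replicate (Suc n) 0 \<in> C"
     "\<And>u v. u\<in>C \<Longrightarrow> v\<in>C \<Longrightarrow> map2 (+) u v \<in> C" "\<And>a u. u\<in>C \<Longrightarrow> map (\<lambda>x. a * x) u \<in> C"
    using Suc.prems unfolding linear_code_def by auto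
  define C0 where "C0 = {w. 0#w \<in> C}"
  have lin0: "linear_code n C0"
    unfolding linear_code_def C0_def
    using L(1) L(2) L(3)[of "0#_" "0#_"] L(4)[of "0#_"] by auto
  from Suc.IH[OF lin0] obtain k0 where k0: "k0 \<le> n" "card C0 = ?q ^ k0"
    "card (dual_code n C0) = ?q ^ (n-k0)" by blast
  have lenC0: "\<And>w. w \<in> C0 \<Longrightarrow> length w = n" using L(1) unfolding C0_def by auto
  show ?case
  proof (cases "\<forall>c\<in>C. hd c = 0")
    case True
    have CC: "C = (Cons 0) ` C0"
    proof
      show "C \<subseteq> (Cons 0) ` C0"
      proof
        fix c assume c: "c \<in> C"
        then obtain x t where "c = x#t" using L(1) len_Suc_Cons by blast
        then show "c \<in> (Cons 0) ` C0" using True c unfolding C0_def by auto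
      qed
    qed (auto simp: C0_def)
    have DD: "dual_code (Suc n) C = (\<lambda>(y,u). y#u) ` (UNIV \<times> dual_code n C0)"
    proof
      show "dual_code (Suc n) C \<subseteq> (\<lambda>(y,u). y#u) ` (UNIV \<times> dual_code n C0)"
      proof
        fix v assume v: "v \<in> dual_code (Suc n) C"
        then obtain y u where vu: "v = y#u" "length u = n" using len_Suc_Cons unfolding dual_code_def by blast
        have "u \<in> dual_code n C0" unfolding dual_code_def
        proof (intro CollectI conjI ballI)
          fix w assume "w \<in> C0"
          then have "0#w \<in> C" unfolding C0_def by simp
          then show "(\<Sum>i<n. u ! i * w ! i) = 0" using v vu dot_Cons[of y u 0 w n]
            unfolding dual_code_def by auto
        qed (rule vu(2))
        then show "v \<in> (\<lambda>(y,u). y#u) ` (UNIV \<times> dual_code n C0)" using vu by auto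
      qed
      show "(\<lambda>(y,u). y#u) ` (UNIV \<times> dual_code n C0) \<subseteq> dual_code (Suc n) C"
      proof
        fix v assume "v \<in> (\<lambda>(y,u). y#u) ` (UNIV \<times> dual_code n C0)"
        then obtain y u where vu: "v = y#u" "u \<in> dual_code n C0" by auto
        show "v \<in> dual_code (Suc n) C" unfolding dual_code_def
        proof (intro CollectI conjI ballI)
          show "length v = Suc n" using vu unfolding dual_code_def by auto
          fix c assume "c \<in> C"
          then obtain w where "c = 0#w" "w \<in> C0" using CC by auto
          then show "(\<Sum>i<Suc n. v ! i * c ! i) = 0" using vu dot_Cons[of y u 0 w n]
            unfolding dual_code_def by auto
        qed
      qed
    qed
    have "card C = ?q ^ k0" unfolding CC using k0 by (simp add: card_image)
    moreover have "card (dual_code (Suc n) C) = ?q ^ (Suc n - k0)" unfolding DD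
      using k0 by (subst card_image) (auto simp: inj_on_def card_cartesian_product Suc_diff_le)
    ultimately show ?thesis using k0 by (intro exI[of _ k0]) auto
  next
    case False
    then obtain a where a: "a \<in> C" "hd a \<noteq> 0" by auto
    then obtain a0 a' where aa: "a = a0 # a'" "length a' = n" using L(1) len_Suc_Cons by blast
    define b' where "b' = map (\<lambda>x. inverse a0 * x) a'"
    have bC: "1 # b' \<in> C" using L(4)[OF a(1), of "inverse a0"] a(2) aa unfolding b'_def by simp
    have lb: "length b' = n" using aa b'_def by simp
    define f where "f = (\<lambda>(x::'a,w). x # map2 (+) (map (\<lambda>z. x*z) b') w)"
    have red: "0 # map2 (+) t (map (\<lambda>z. (-x)*z) b') \<in> C" if "x#t \<in> C" for x t
      using L(3)[OF that L(4)[OF bC, of "-x"]] by simp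
    have CC: "C = f ` (UNIV \<times> C0)"
    proof
      show "C \<subseteq> f ` (UNIV \<times> C0)"
      proof
        fix c assume c: "c \<in> C"
        then obtain x t where xt: "c = x#t" "length t = n" using L(1) len_Suc_Cons by blast
        let ?w = "map2 (+) t (map (\<lambda>z. (-x)*z) b')"
        have "?w \<in> C0" unfolding C0_def using red c xt by simp
        moreover have "f (x, ?w) = c" unfolding f_def xt
          by (auto intro!: nth_equalityI simp: xt lb)
        ultimately show "c \<in> f ` (UNIV \<times> C0)" by force
      qed
      show "f ` (UNIV \<times> C0) \<subseteq> C"
      proof
        fix c assume "c \<in> f ` (UNIV \<times> C0)"
        then obtain x w where c: "c = f (x,w)" "w \<in> C0" by auto
        have "map2 (+) (map (\<lambda>z. x*z) (1#b')) (0#w) \<in> C"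
          using L(3)[OF L(4)[OF bC] c(2)[unfolded C0_def, simplified]] .
        then show "c \<in> C" unfolding c f_def by simp
      qed
    qed
    have injf: "inj_on f (UNIV \<times> C0)"
    proof (rule inj_onI, clarsimp)
      fix x w x' w' assume "w \<in> C0" "w' \<in> C0" "f (x,w) = f (x',w')"
      then have xx: "x = x'" and mm: "map2 (+) (map (\<lambda>z. x*z) b') w = map2 (+) (map (\<lambda>z. x*z) b') w'"
        unfolding f_def by auto
      have "w = w'"
      proof (rule nth_equalityI)
        show "length w = length w'" using lenC0 \<open>w \<in> C0\<close> \<open>w' \<in> C0\<close> by simp
        fix i assume "i < length w"
        then have "map2 (+) (map (\<lambda>z. x*z) b') w ! i = map2 (+) (map (\<lambda>z. x*z) b') w' ! i"
          using mm by simp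
        then show "w ! i = w' ! i" using \<open>i < length w\<close> lenC0 \<open>w \<in> C0\<close> \<open>w' \<in> C0\<close> lb by simp
      qed
      then show "x = x' \<and> w = w'" using xx by simp
    qed
    have DD: "dual_code (Suc n) C = (\<lambda>u. (- (\<Sum>i<n. u!i * b'!i)) # u) ` dual_code n C0"
    proof
      show "dual_code (Suc n) C \<subseteq> (\<lambda>u. (- (\<Sum>i<n. u!i * b'!i)) # u) ` dual_code n C0"
      proof
        fix v assume v: "v \<in> dual_code (Suc n) C"
        then obtain y u where vu: "v = y#u" "length u = n" using len_Suc_Cons unfolding dual_code_def by blast
        have "u \<in> dual_code n C0" unfolding dual_code_def
        proof (intro CollectI conjI ballI)
          fix w assume "w \<in> C0"
          then have "0#w \<in> C" unfolding C0_def by simp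
          then show "(\<Sum>i<n. u ! i * w ! i) = 0" using v vu dot_Cons[of y u 0 w n]
            unfolding dual_code_def by auto
        qed (rule vu(2))
        moreover have "y = - (\<Sum>i<n. u!i * b'!i)"
          using bC v vu dot_Cons[of y u 1 b' n] unfolding dual_code_def
          by (auto simp: eq_neg_iff_add_eq_0)
        ultimately show "v \<in> (\<lambda>u. (- (\<Sum>i<n. u!i * b'!i)) # u) ` dual_code n C0" using vu by auto
      qed
      show "(\<lambda>u. (- (\<Sum>i<n. u!i * b'!i)) # u) ` dual_code n C0 \<subseteq> dual_code (Suc n) C"
      proof
        fix v assume "v \<in> (\<lambda>u. (- (\<Sum>i<n. u!i * b'!i)) # u) ` dual_code n C0"
        then obtain u where vu: "v = (- (\<Sum>i<n. u!i * b'!i)) # u" "u \<in> dual_code n C0" by auto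
        have lu: "length u = n" using vu unfolding dual_code_def by auto
        show "v \<in> dual_code (Suc n) C" unfolding dual_code_def
        proof (intro CollectI conjI ballI)
          show "length v = Suc n" using vu lu by auto
          fix c assume c: "c \<in> C"
          then obtain x t where xt: "c = x#t" "length t = n" using L(1) len_Suc_Cons by blast
          let ?w = "map2 (+) t (map (\<lambda>z. (-x)*z) b')"
          have "?w \<in> C0" unfolding C0_def using red c xt by simp
          then have "(\<Sum>i<n. u ! i * ?w ! i) = 0" using vu unfolding dual_code_def by auto
          moreover have "(\<Sum>i<n. u ! i * ?w ! i) = (\<Sum>i<n. u ! i * t ! i) - x * (\<Sum>i<n. u!i * b'!i)"
          proof -
            have "(\<Sum>i<n. u ! i * ?w ! i) = (\<Sum>i<n. u ! i * t ! i - x * (u!i * b'!i))"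
              by (rule sum.cong) (auto simp: xt lb algebra_simps)
            also have "\<dots> = (\<Sum>i<n. u ! i * t ! i) - x * (\<Sum>i<n. u!i * b'!i)"
              by (simp add: sum_subtractf sum_distrib_left)
            finally show ?thesis .
          qed
          ultimately show "(\<Sum>i<Suc n. v ! i * c ! i) = 0"
            using dot_Cons[of "- (\<Sum>i<n. u!i * b'!i)" u x t n] vu xt by (simp add: algebra_simps)
        qed
      qed
    qed
    have "card C = ?q ^ Suc k0" unfolding CC using k0 injf
      by (simp add: card_image card_cartesian_product)
    moreover have "card (dual_code (Suc n) C) = ?q ^ (Suc n - Suc k0)" unfolding DD
      using k0 by (subst card_image) (auto simp: inj_on_def)
    ultimately show ?thesis using k0 by (intro exI[of _ "Suc k0"]) auto
  qed
qed



lemma aut_0: "field_automorphism \<theta> \<Longrightarrow> \<theta> 0 = 0"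
  unfolding field_automorphism_def by (metis add_cancel_right_right add_0)

lemma aut_sum: "field_automorphism \<theta> \<Longrightarrow> \<theta> (sum f A) = sum (\<lambda>i. \<theta> (f i)) A"
  by (induction A rule: infinite_finite_induct) (auto simp: aut_0 field_automorphism_def)

lemma aut_eq0: "field_automorphism \<theta> \<Longrightarrow> \<theta> x = 0 \<Longrightarrow> x = 0"
  using aut_0[of \<theta>] unfolding field_automorphism_def bij_def inj_def by metis

theorem mainTheorem3:
  fixes \<theta> :: "'a::{finite,field} \<Rightarrow> 'a" and \<alpha> :: 'a and n :: nat
    and C :: "'a list set" and g :: "'a poly"
  assumes "field_automorphism \<theta>"
    and "\<alpha> \<noteq> 0"
    and "skew_cyclic_code n \<alpha> \<theta> C"
    and "skew_generator n \<alpha> \<theta> C g"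
    and "0 < degree g"
    and "C = dual_code n C"
  shows "even n \<and> (\<alpha> = 1 \<or> \<alpha> = -1)"
proof -
  have lin: "linear_code n C" and sh: "\<And>c. c \<in> C \<Longrightarrow> skew_shift \<alpha> \<theta> c \<in> C"
    using assms(3) unfolding skew_cyclic_code_def by auto
  have ev: "even n"
  proof -
    obtain k where k: "k \<le> n" "card C = card (UNIV::'a set) ^ k"
      "card (dual_code n C) = card (UNIV::'a set) ^ (n-k)" using count_code[OF lin] by blast
    have q: "1 < card (UNIV::'a set)"
    proof -
      have "{0::'a, 1} \<subseteq> UNIV" by simp
      then have "card {0::'a,1} \<le> card (UNIV::'a set)" by (rule card_mono[OF finite_UNIV])
      then show ?thesis by simp
    qed
    have "card (UNIV::'a set) ^ k = card (UNIV::'a set) ^ (n-k)" using k assms(6) by metis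
    then have "k = n - k" using q power_inject_exp by blast
    then show ?thesis using k by presburger
  qed
  have al: "\<alpha> = 1 \<or> \<alpha> = -1"
  proof (cases n)
    case 0
    have e: "[] \<in> C" using lin 0 unfolding linear_code_def by auto
    have "skew_mult \<theta> 1 (monom 1 n - [:\<alpha>:]) = [:1 - \<alpha>:]"
      using 0 by (simp add: skew_mult_def monom_0)
    then have p: "[:1 - \<alpha>:] \<in> code_ideal n \<alpha> \<theta> C" unfolding code_ideal_def
      using e by (auto intro!: bexI[of _ "[]"] exI[of _ 1])
    show ?thesis
    proof (rule ccontr)
      assume "\<not> ?thesis"
      then have "[:1 - \<alpha>:] \<noteq> 0" by simp
      then have "degree g \<le> degree [:1 - \<alpha>:]" using p assms(4) unfolding skew_generator_def by blast
      then show False using assms(5) by simp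
    qed
  next
    case (Suc m)
    have key: "(\<alpha>*\<alpha> - 1) * (\<theta> (c!m) * \<theta> (c!m)) = 0" if c: "c \<in> C" for c
    proof -
      have lc: "length c = Suc m" using c lin Suc unfolding linear_code_def by auto
      have s: "skew_shift \<alpha> \<theta> c = (\<alpha> * \<theta> (c!m)) # map \<theta> (butlast c)"
        using lc unfolding skew_shift_def by (cases c) (auto simp: last_conv_nth)
      have "skew_shift \<alpha> \<theta> c \<in> dual_code n C" using sh[OF c] assms(6) by simp
      then have "(\<Sum>i<Suc m. skew_shift \<alpha> \<theta> c ! i * skew_shift \<alpha> \<theta> c ! i) = 0"
        using sh[OF c] Suc unfolding dual_code_def by auto
      also have "(\<Sum>i<Suc m. skew_shift \<alpha> \<theta> c ! i * skew_shift \<alpha> \<theta> c ! i)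
          = (\<alpha> * \<theta> (c!m)) * (\<alpha> * \<theta> (c!m)) + (\<Sum>i<m. \<theta> (c!i) * \<theta> (c!i))"
        unfolding s by (subst sum.lessThan_Suc_shift) (auto simp: lc nth_butlast intro!: sum.cong)
      finally have A: "(\<alpha> * \<theta> (c!m)) * (\<alpha> * \<theta> (c!m)) + (\<Sum>i<m. \<theta> (c!i) * \<theta> (c!i)) = 0" .
      have "c \<in> dual_code n C" using c assms(6) by simp
      then have "(\<Sum>i<Suc m. c ! i * c ! i) = 0" using c Suc unfolding dual_code_def by auto
      then have "\<theta> (\<Sum>i<Suc m. c ! i * c ! i) = 0" using aut_0[OF assms(1)] by simp
      then have B: "(\<Sum>i<m. \<theta> (c!i) * \<theta> (c!i)) + \<theta> (c!m) * \<theta> (c!m) = 0"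
        using assms(1) unfolding aut_sum[OF assms(1)] by (simp add: field_automorphism_def)
      have "(\<alpha> * \<theta> (c!m)) * (\<alpha> * \<theta> (c!m)) = \<theta> (c!m) * \<theta> (c!m)"
        using A B by (metis add.commute add_left_cancel)
      then show ?thesis by (simp add: algebra_simps)
    qed
    show ?thesis
    proof (rule ccontr)
      assume na: "\<not> ?thesis"
      have "\<alpha>*\<alpha> - 1 \<noteq> 0"
      proof
        assume "\<alpha>*\<alpha> - 1 = 0"
        then have "(\<alpha> - 1) * (\<alpha> + 1) = 0" by (simp add: algebra_simps)
        then show False using na by (auto simp: eq_neg_iff_add_eq_0)
      qed
      then have z: "c!m = 0" if "c \<in> C" for c using key[OF that] aut_eq0[OF assms(1)] by auto
      define u :: "'a list" where "u = replicate m 0 @ [1]"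
      have "u \<in> dual_code n C" unfolding dual_code_def
      proof (intro CollectI conjI ballI)
        show "length u = n" using Suc u_def by simp
        fix c assume "c \<in> C"
        then show "(\<Sum>i<n. u ! i * c ! i) = 0" using z Suc
          by (simp add: u_def nth_append)
      qed
      then have "u \<in> C" using assms(6) by simp
      then show False using z[of u] unfolding u_def by (simp add: nth_append)
    qed
  qed
  show ?thesis using ev al by simp
qed

end
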